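(* Let $r\ge3$, $n=2^r$, $m=2^{r-2}$ and $N=m$, so that $\Psi_n(x)=V_m(x)$. Let $p(x),q(x)\in\mathbb Z[x]$ have degree at most $m-1$, written $p=\sum_{i<m}a_iV_i$, $q=\sum_{i<m}b_iV_i$, and let $\overline r(x)=\sum_{i<m}c_iV_i(x)$ be the residue of $p(x)q(x)$ modulo $\Psi_n(x)$. Then $$\mathbf c=\frac4N\,\mathsf{IDCT}\big(\mathsf{DCT}(\mathbf a)\odot\mathsf{DCT}(\mathbf b)\big),$$ where $\mathbf a,\mathbf b,\mathbf c$ are the coefficient vectors and $\odot$ is the componentwise product.
   Context: $V_0(x)=1$, $V_i(x)=2T_i(x/2)$ for $i\ge1$ ($T_i$ the Chebyshev polynomial of the first kind). $\Psi_n$ is the minimal polynomial of $2\cos(2\pi/n)$. For $\mathbf a\in\mathbb R^N$: $\mathsf{DCT}(\mathbf a)_j=\frac{a_0}{2}+\sum_{i=1}^{N-1}a_i\cos\!\left(\frac{2\pi(2j+1)i}{4N}\right)$ and $\mathsf{IDCT}(\mathbf a)_j=\sum_{i=0}^{N-1}a_i\cos\!\left(\frac{2\pi(2i+1)j}{4N}\right)$, $0\le j\le N-1$. *)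

theory Defs
  imports Complex_Main "HOL-Computational_Algebra.Polynomial"
begin

fun cheb_T :: "nat \<Rightarrow> real poly" where
  "cheb_T 0 = 1"
| "cheb_T (Suc 0) = [:0, 1:]"
| "cheb_T (Suc (Suc k)) = [:0, 2:] * cheb_T (Suc k) - cheb_T k"

definition V :: "nat \<Rightarrow> real poly" where
  "V i = (if i = 0 then 1 else smult 2 (pcompose (cheb_T i) [:0, 1/2:]))"

definition min_poly_rat :: "real \<Rightarrow> rat poly" where
  "min_poly_rat \<alpha> = (THE p. lead_coeff p = 1 \<and> poly (map_poly of_rat p) \<alpha> = 0 \<and>
      (\<forall>q. q \<noteq> 0 \<and> poly (map_poly of_rat q) \<alpha> = 0 \<longrightarrow> degree p \<le> degree q))"

definition Psi :: "nat \<Rightarrow> rat poly" where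
  "Psi n = min_poly_rat (2 * cos (2 * pi / real n))"

definition DCT :: "nat \<Rightarrow> (nat \<Rightarrow> real) \<Rightarrow> nat \<Rightarrow> real" where
  "DCT N a j = a 0 / 2 + (\<Sum>i\<in>{1..<N}. a i * cos (2 * pi * real (2 * j + 1) * real i / (4 * real N)))"

definition IDCT :: "nat \<Rightarrow> (nat \<Rightarrow> real) \<Rightarrow> nat \<Rightarrow> real" where
  "IDCT N a j = (\<Sum>i<N. a i * cos (2 * pi * real (2 * i + 1) * real j / (4 * real N)))"

end

theory Submission
  imports Defs "Berlekamp_Zassenhaus.Factor_Bound"
begin

hide_const (open) Module.module.smult


lemma cheb_cos: "poly (cheb_T i) (cos t) = cos (real i * t)"
proof (induction i rule: cheb_T.induct)
  case 1 then show ?case by simp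
next
  case 2 then show ?case by simp
next
  case (3 k)
  have "cos (real (Suc (Suc k)) * t) = 2 * cos t * cos (real (Suc k) * t) - cos (real k * t)"
  proof -
    have a: "real (Suc (Suc k)) * t = real (Suc k) * t + t" and b: "real k * t = real (Suc k) * t - t"
      by (simp_all add: algebra_simps)
    show ?thesis unfolding a b cos_add cos_diff by simp
  qed
  then show ?case using 3 by (simp add: algebra_simps)
qed

lemma V_cos: "poly (V i) (2 * cos t) = (if i = 0 then 1 else 2 * cos (real i * t))"
  by (simp add: V_def poly_pcompose cheb_cos)

fun D :: "nat \<Rightarrow> int poly" where
  "D 0 = [:0, 1:]"
| "D (Suc j) = D j ^ 2 - [:2:]"

lemma D_cos: "poly (map_poly real_of_int (D j)) (2 * cos t) = 2 * cos (2 ^ j * t)"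
proof (induction j arbitrary: t)
  case 0 then show ?case by simp
next
  case (Suc j)
  have "poly (map_poly real_of_int (D (Suc j))) (2 * cos t) = (poly (map_poly real_of_int (D j)) (2 * cos t))^2 - 2"
    by (simp add: of_int_poly_hom.hom_power of_int_poly_hom.hom_minus)
  also have "\<dots> = 2 * cos (2 * (2 ^ j * t))" using Suc by (simp add: cos_double_cos power2_eq_square)
  finally show ?case by (simp add: mult.assoc)
qed


lemma poly_of_rat_mult:
  "poly (map_poly (of_rat::rat\<Rightarrow>real) (p*q)) x = poly (map_poly of_rat p) x * poly (map_poly of_rat q) x"
proof (induction p)
  case 0 then show ?case by simp
next
  case (pCons a p)
  then show ?case by (simp add: of_rat_hom.map_poly_hom_add of_rat_hom.map_poly_hom_smult of_rat_hom.map_poly_pCons_hom algebra_simps)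
qed

lemma D_props:
  "degree (D j) = 2^j \<and> Polynomial.coeff (D j) (2^j) = 1 \<and> (\<forall>k<2^j. even (Polynomial.coeff (D j) k)) \<and> Polynomial.coeff (D j) 0 \<in> {0,2,-2}"
proof (induction j)
  case 0 then show ?case by simp
next
  case (Suc j)
  define p where "p = D j"
  define M where "M = (2::nat)^j"
  have dp: "degree p = M" and lp: "Polynomial.coeff p M = 1" and ev: "\<And>k. k < M \<Longrightarrow> even (Polynomial.coeff p k)"
    and c0: "Polynomial.coeff p 0 \<in> {0,2,-2}"
    using Suc by (auto simp: p_def M_def)
  have M0: "M > 0" by (simp add: M_def)
  have DS: "D (Suc j) = p * p - [:2:]" by (simp add: p_def power2_eq_square)
  have cM: "Polynomial.coeff (p*p) (2*M) = 1"
    using coeff_mult_degree_sum[of p p] dp lp by (simp add: mult_2)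
  have c2M: "Polynomial.coeff (D (Suc j)) (2*M) = 1" using cM M0 unfolding DS by (simp add: coeff_pCons split: nat.split)
  have dle: "degree (D (Suc j)) \<le> 2*M" unfolding DS
  proof -
    have "degree (p * p - [:2:]) \<le> max (degree (p*p)) (degree [:2::int:])" by (rule degree_diff_le_max)
    also have "\<dots> \<le> 2 * M" using degree_mult_le[of p p] dp by simp
    finally show "degree (p * p - [:2:]) \<le> 2 * M" .
  qed
  have deg: "degree (D (Suc j)) = 2*M" using dle c2M le_degree[of "D (Suc j)" "2*M"] by fastforce
  have evk: "even (Polynomial.coeff (D (Suc j)) k)" if "k < 2*M" for k
  proof -
    have "even (Polynomial.coeff (p*p) k)"
      unfolding coeff_mult
    proof (rule dvd_sum)
      fix i assume "i \<in> {..k}"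
      show "2 dvd Polynomial.coeff p i * Polynomial.coeff p (k - i)"
      proof (cases "i < M")
        case True then show ?thesis using ev by simp
      next
        case False then have "k - i < M" using that by linarith
        then show ?thesis using ev by simp
      qed
    qed
    then show ?thesis unfolding DS by (cases k) auto
  qed
  have "Polynomial.coeff (D (Suc j)) 0 = Polynomial.coeff p 0 * Polynomial.coeff p 0 - 2" unfolding DS by (simp add: coeff_mult)
  then have "Polynomial.coeff (D (Suc j)) 0 \<in> {0,2,-2}" using c0 by auto
  then show ?case using deg c2M evk by (simp add: M_def)
qed

lemma D_c0: "Polynomial.coeff (D (Suc j)) 0 \<in> {2,-2}"
proof -
  have "Polynomial.coeff (D (Suc j)) 0 = Polynomial.coeff (D j) 0 * Polynomial.coeff (D j) 0 - 2" by (simp add: coeff_mult power2_eq_square)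
  then show ?thesis using D_props[of j] by auto
qed

lemma D_eis_aux:
  assumes gh: "D j = g * h" and dg: "0 < degree g" and dh: "0 < degree h" and h0: "odd (Polynomial.coeff h 0)"
    and c0: "Polynomial.coeff (D j) 0 \<in> {2,-2}"
  shows False
proof -
  define M where "M = (2::nat)^j"
  have dD: "degree (D j) = M" and lD: "Polynomial.coeff (D j) M = 1" and evD: "\<And>k. k < M \<Longrightarrow> even (Polynomial.coeff (D j) k)"
    using D_props[of j] by (auto simp: M_def)
  have evg: "even (Polynomial.coeff g k)" if "k < M" for k
    using that
  proof (induction k rule: less_induct)
    case (less k)
    have "Polynomial.coeff (D j) k = (\<Sum>i\<le>k. Polynomial.coeff g i * Polynomial.coeff h (k - i))" by (simp add: gh coeff_mult)
    also have "\<dots> = (\<Sum>i<k. Polynomial.coeff g i * Polynomial.coeff h (k - i)) + Polynomial.coeff g k * Polynomial.coeff h 0"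
      by (simp add: lessThan_Suc_atMost[symmetric])
    finally have eq: "Polynomial.coeff (D j) k = (\<Sum>i<k. Polynomial.coeff g i * Polynomial.coeff h (k - i)) + Polynomial.coeff g k * Polynomial.coeff h 0" .
    have e1: "even (\<Sum>i<k. Polynomial.coeff g i * Polynomial.coeff h (k - i))"
      by (rule dvd_sum) (use less in auto)
    have "even (Polynomial.coeff (D j) k)" using evD less.prems by simp
    then have "even (Polynomial.coeff g k * Polynomial.coeff h 0)" using eq e1 by simp
    then show ?case using h0 by simp
  qed
  have g0: "g \<noteq> 0" and h0': "h \<noteq> 0" using dg dh by auto
  have "degree (D j) = degree g + degree h" using gh g0 h0' by (simp add: degree_mult_eq)
  then have dgM: "degree g < M" and dsum: "degree g + degree h = M" using dh dD by auto
  have "Polynomial.coeff (D j) M = Polynomial.coeff g (degree g) * Polynomial.coeff h (degree h)"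
    using coeff_mult_degree_sum[of g h] gh dsum by simp
  then have "1 = Polynomial.coeff g (degree g) * Polynomial.coeff h (degree h)" using lD by simp
  moreover have "even (Polynomial.coeff g (degree g))" using evg dgM by simp
  ultimately show False by (metis dvd_mult2 odd_one)
qed

lemma D_irred:
  assumes "D (Suc j) = g * h"
  shows "degree g = 0 \<or> degree h = 0"
proof (rule ccontr)
  assume nz: "\<not> (degree g = 0 \<or> degree h = 0)"
  have c0: "Polynomial.coeff (D (Suc j)) 0 \<in> {2,-2}" by (rule D_c0)
  have prod: "Polynomial.coeff (D (Suc j)) 0 = Polynomial.coeff g 0 * Polynomial.coeff h 0" using assms by (simp add: coeff_mult)
  show False
  proof (cases "odd (Polynomial.coeff h 0)")
    case True then show False using D_eis_aux[OF assms] nz c0 by auto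
  next
    case False
    show False
    proof (cases "odd (Polynomial.coeff g 0)")
      case True
      have "D (Suc j) = h * g" using assms by (simp add: mult.commute)
      then show False using D_eis_aux[of "Suc j" h g] True nz c0 by auto
    next
      case False2: False
      then obtain u where "Polynomial.coeff g 0 = 2 * u" by (auto elim: evenE)
      moreover obtain v where "Polynomial.coeff h 0 = 2 * v" using False by (auto elim: evenE)
      ultimately have "Polynomial.coeff (D (Suc j)) 0 = 4 * (u * v)" using prod by simp
      then have "(4::int) dvd Polynomial.coeff (D (Suc j)) 0" by simp
      then show False using c0 by auto
    qed
  qed
qed



lemma of_rat_of_int_poly: "map_poly real_of_rat (map_poly rat_of_int p) = map_poly real_of_int p"
  by (simp add: map_poly_map_poly o_def)

lemma D_ne0: "D j \<noteq> 0" using D_props[of j] by auto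

lemma D_root: "poly (map_poly real_of_int (D j)) (2 * cos (pi / 2^(Suc j))) = 0"
proof -
  have "2 ^ j * (pi / 2^(Suc j)) = pi / 2" by (simp add: field_simps)
  then show ?thesis using D_cos[of j "pi / 2^(Suc j)"] by simp
qed

lemma min_deg:
  assumes q: "q \<noteq> 0" and qr: "poly (map_poly real_of_rat q) (2 * cos (pi / 2^(Suc (Suc j)))) = 0"
  shows "2^(Suc j) \<le> degree q"
proof -
  define x where "x = 2 * cos (pi / 2^(Suc (Suc j)))"
  define P where "P = map_poly rat_of_int (D (Suc j))"
  have Pr: "poly (map_poly real_of_rat P) x = 0"
    unfolding P_def of_rat_of_int_poly x_def by (rule D_root)
  have dP: "degree P = 2^(Suc j)" unfolding P_def using D_props[of "Suc j"] by simp
  define g where "g = gcd q P"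
  have bz: "fst (bezout_coefficients q P) * q + snd (bezout_coefficients q P) * P = g"
    unfolding g_def by (rule bezout_coefficients_fst_snd)
  have gr: "poly (map_poly real_of_rat g) x = 0"
    unfolding bz[symmetric] of_rat_hom.map_poly_hom_add poly_add poly_of_rat_mult
    using Pr qr by (simp add: x_def)
  have g0: "g \<noteq> 0" using q by (simp add: g_def)
  have dg: "degree g > 0"
  proof (rule ccontr)
    assume "\<not> degree g > 0"
    then have "degree g = 0" by simp
    then obtain c where gc: "g = [:c:]" by (metis degree_0_id)
    have c0: "c \<noteq> 0" using g0 gc by simp
    have "poly (map_poly real_of_rat g) x = of_rat c"
      unfolding gc by (simp add: of_rat_hom.map_poly_pCons_hom)
    moreover have "(of_rat c :: real) \<noteq> 0" using c0 by simp
    ultimately show False using gr by simp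
  qed
  have "g dvd P" unfolding g_def by simp
  then obtain h where Pgh: "P = g * h" by (auto elim: dvdE)
  have "degree g \<ge> degree P"
  proof (rule ccontr)
    assume "\<not> degree g \<ge> degree P"
    then have lt: "degree g < degree P" by simp
    have h0: "h \<noteq> 0" using Pgh dP by auto
    have "degree P = degree g + degree h" using Pgh g0 h0 by (simp add: degree_mult_eq)
    then have dh: "degree h > 0" using lt by simp
    have "map_poly rat_of_int (D (Suc j)) = g * h" using Pgh by (simp add: P_def)
    from rat_to_int_factor[OF this]
    obtain g' h' where gh': "D (Suc j) = g' * h'" "degree g' = degree g" "degree h' = degree h"
      by blast
    from D_irred[OF gh'(1)] show False using gh'(2,3) dg dh by simp
  qed
  moreover have "degree g \<le> degree q"
    by (rule dvd_imp_degree_le) (simp_all add: g_def q)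
  ultimately show ?thesis using dP by simp
qed

lemma Psi_D: "Psi (2 ^ Suc (Suc (Suc j))) = map_poly rat_of_int (D (Suc j))"
proof -
  define P where "P = map_poly rat_of_int (D (Suc j))"
  define x where "x = 2 * cos (pi / 2^(Suc (Suc j)))"
  have xe: "2 * cos (2 * pi / real (2 ^ Suc (Suc (Suc j)))) = x"
  proof -
    have "real (2 ^ Suc (Suc (Suc j))) = 2 * 2 ^ Suc (Suc j)" by simp
    then have "2 * pi / real (2 ^ Suc (Suc (Suc j))) = pi / 2 ^ Suc (Suc j)" by simp
    then show ?thesis unfolding x_def by simp
  qed
  have dP: "degree P = 2^(Suc j)" unfolding P_def using D_props[of "Suc j"] by simp
  have lP: "lead_coeff P = 1" using D_props[of "Suc j"] unfolding P_def by simp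
  have Pr: "poly (map_poly real_of_rat P) x = 0"
    unfolding P_def of_rat_of_int_poly x_def by (rule D_root)
  have mn: "\<forall>q. q \<noteq> 0 \<and> poly (map_poly real_of_rat q) x = 0 \<longrightarrow> degree P \<le> degree q"
    using min_deg dP unfolding x_def by auto
  have "min_poly_rat x = P"
    unfolding min_poly_rat_def
  proof (rule the_equality)
    show "lead_coeff P = 1 \<and> poly (map_poly real_of_rat P) x = 0 \<and>
      (\<forall>q. q \<noteq> 0 \<and> poly (map_poly real_of_rat q) x = 0 \<longrightarrow> degree P \<le> degree q)"
      using lP Pr mn by blast
  next
    fix p assume asm: "lead_coeff p = 1 \<and> poly (map_poly real_of_rat p) x = 0 \<and>
      (\<forall>q. q \<noteq> 0 \<and> poly (map_poly real_of_rat q) x = 0 \<longrightarrow> degree p \<le> degree q)"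
    have p0: "p \<noteq> 0" using asm by auto
    have P0: "P \<noteq> 0" using lP by auto
    have d1: "degree p \<le> degree P" using asm Pr P0 by blast
    have d2: "degree P \<le> degree p" using mn asm p0 by blast
    define d where "d = p - P"
    have pd: "p = d + P" by (simp add: d_def)
    have dr: "poly (map_poly real_of_rat d) x = 0"
      using asm Pr unfolding pd of_rat_hom.map_poly_hom_add poly_add by simp
    show "p = P"
    proof (rule ccontr)
      assume "p \<noteq> P"
      then have d0: "d \<noteq> 0" by (simp add: d_def)
      have "degree d \<le> max (degree p) (degree P)" unfolding d_def by (rule degree_diff_le_max)
      then have dle: "degree d \<le> degree P" using d1 d2 by simp
      have "Polynomial.coeff d (degree P) = 0" using asm lP d1 d2 by (simp add: d_def)
      then have "degree d \<noteq> degree P"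
      proof (intro notI)
        assume "Polynomial.coeff d (degree P) = 0" "degree d = degree P"
        then have "Polynomial.coeff d (degree d) = 0" by simp
        then show False using d0 by simp
      qed
      then have "degree d < degree P" using dle by simp
      moreover have "degree P \<le> degree d" using mn d0 dr by blast
      ultimately show False by simp
    qed
  qed
  then show ?thesis unfolding Psi_def xe P_def .
qed

lemma V_D: "V (2^j) = map_poly real_of_int (D j)"
proof -
  define d where "d = V (2^j) - map_poly real_of_int (D j)"
  have "{-2..2::real} \<subseteq> {y. poly d y = 0}"
  proof
    fix y :: real assume "y \<in> {-2..2}"
    then have "cos (arccos (y/2)) = y/2" by (intro cos_arccos) auto
    then have "y = 2 * cos (arccos (y/2))" by simp
    then obtain t where ye: "y = 2 * cos t" by blast
    have "poly d (2 * cos t) = 0"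
      unfolding d_def poly_diff V_cos D_cos by simp
    then show "y \<in> {y. poly d y = 0}" using ye by simp
  qed
  moreover have "infinite {-2..2::real}" by simp
  ultimately have "infinite {y. poly d y = 0}" using finite_subset by blast
  then have "d = 0" using poly_roots_finite by blast
  then show ?thesis by (simp add: d_def)
qed



definition theta :: "nat \<Rightarrow> nat \<Rightarrow> real" where
  "theta m t = pi * real (2 * t + 1) / (2 * real m)"

lemma sum_cos_zero:
  fixes m :: nat and l :: int
  assumes l0: "l \<noteq> 0" and lm: "\<bar>l\<bar> < 2 * int m"
  shows "(\<Sum>t<m. cos (of_int l * theta m t)) = 0"
proof -
  have m0: "m > 0" using lm l0 by linarith
  define \<phi> where "\<phi> = of_int l * pi / (2 * real m)"
  have sphi: "sin \<phi> \<noteq> 0"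
  proof
    assume "sin \<phi> = 0"
    moreover have "\<phi> = (of_int l / (2 * real m)) * pi" by (simp add: \<phi>_def)
    ultimately have "of_int l / (2 * real m) \<in> \<int>" using sin_times_pi_eq_0 by metis
    then obtain i where i: "of_int l / (2 * real m) = of_int i" by (auto elim: Ints_cases)
    then have "(of_int l :: real) = of_int (2 * int m * i)" using m0 by (simp add: field_simps)
    then have li: "l = 2 * int m * i" by (simp only: of_int_eq_iff)
    then have "i \<noteq> 0" using l0 by auto
    then have "\<bar>l\<bar> \<ge> 2 * int m" unfolding li abs_mult using m0
      by (simp add: abs_mult)
    then show False using lm by simp
  qed
  have trm: "2 * sin \<phi> * cos (of_int l * theta m t) = sin (real (2 * Suc t) * \<phi>) - sin (real (2 * t) * \<phi>)" for t
  proof -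
    have "of_int l * theta m t = real (2*t+1) * \<phi>" unfolding theta_def \<phi>_def by (simp add: field_simps)
    moreover have "2 * sin \<phi> * cos (real (2*t+1) * \<phi>) = sin (\<phi> + real (2*t+1) * \<phi>) + sin (\<phi> - real (2*t+1) * \<phi>)"
      using sin_times_cos[of \<phi> "real (2*t+1) * \<phi>"] by simp
    moreover have "\<phi> + real (2*t+1) * \<phi> = real (2 * Suc t) * \<phi>" by (simp add: algebra_simps)
    moreover have "\<phi> - real (2*t+1) * \<phi> = - (real (2 * t) * \<phi>)" by (simp add: algebra_simps)
    ultimately show ?thesis by simp
  qed
  have "2 * sin \<phi> * (\<Sum>t<m. cos (of_int l * theta m t)) = (\<Sum>t<m. sin (real (2 * Suc t) * \<phi>) - sin (real (2 * t) * \<phi>))"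
    by (simp add: sum_distrib_left trm)
  also have "\<dots> = sin (real (2 * m) * \<phi>) - sin (real (2 * 0) * \<phi>)"
    by (rule sum_lessThan_telescope[where f = "\<lambda>t. sin (real (2 * t) * \<phi>)"])
  also have "\<dots> = sin (of_int l * pi)" using m0 by (simp add: \<phi>_def)
  also have "\<dots> = 0" by (simp add: sin_times_pi_eq_0)
  finally show ?thesis using sphi by simp
qed

lemma sum_cos_0: "(\<Sum>t<m. cos (of_int 0 * theta m t)) = real m" by simp

lemma ortho:
  assumes "i < m" "k < m"
  shows "(\<Sum>t<m. cos (real i * theta m t) * cos (real k * theta m t)) =
     (if i = k then (if k = 0 then real m else real m / 2) else 0)"
proof -
  define S where "S l = (\<Sum>t<m. cos (of_int l * theta m t))" for l :: int
  have "(\<Sum>t<m. cos (real i * theta m t) * cos (real k * theta m t)) =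
      (\<Sum>t<m. (cos (of_int (int i - int k) * theta m t) + cos (of_int (int i + int k) * theta m t)) / 2)"
    by (rule sum.cong) (simp_all add: cos_times_cos algebra_simps)
  also have "\<dots> = (S (int i - int k) + S (int i + int k)) / 2"
    unfolding S_def sum.distrib[symmetric] sum_divide_distrib[symmetric] by simp
  finally have eq: "(\<Sum>t<m. cos (real i * theta m t) * cos (real k * theta m t)) = (S (int i - int k) + S (int i + int k)) / 2" .
  have S0: "S 0 = real m" by (simp add: S_def)
  have Sz: "S l = 0" if "l \<noteq> 0" "\<bar>l\<bar> < 2 * int m" for l
    unfolding S_def by (rule sum_cos_zero) (use that in auto)
  show ?thesis
  proof (cases "i = k")
    case True
    show ?thesis
    proof (cases "k = 0")
      case True then show ?thesis using eq S0 \<open>i = k\<close> by simp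
    next
      case False
      then have "S (int i + int k) = 0" using Sz \<open>i = k\<close> assms by simp
      then show ?thesis using eq S0 \<open>i = k\<close> False by simp
    qed
  next
    case False
    have "S (int i - int k) = 0" using Sz False assms by simp
    moreover have "S (int i + int k) = 0" using Sz False assms by simp
    ultimately show ?thesis using eq False by simp
  qed
qed

lemma inversion:
  fixes c :: "nat \<Rightarrow> real"
  assumes "k < m"
  shows "(\<Sum>t<m. (\<Sum>i<m. c i * (if i = 0 then 1 else 2) * cos (real i * theta m t)) * cos (real k * theta m t)) = real m * c k"
proof -
  have "(\<Sum>t<m. (\<Sum>i<m. c i * (if i = 0 then 1 else 2) * cos (real i * theta m t)) * cos (real k * theta m t))
      = (\<Sum>i<m. c i * (if i = 0 then 1 else 2) * (\<Sum>t<m. cos (real i * theta m t) * cos (real k * theta m t)))"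
    unfolding sum_distrib_right sum_distrib_left
    by (subst sum.swap) (simp add: mult.assoc)
  also have "\<dots> = (\<Sum>i<m. if i = k then c k * (if k = 0 then 1 else 2) * (if k = 0 then real m else real m / 2) else 0)"
    by (rule sum.cong) (simp_all add: ortho assms)
  also have "\<dots> = real m * c k" using assms by (simp add: sum.delta)
  finally show ?thesis .
qed




lemma cos_arg: "m > 0 \<Longrightarrow> 2 * pi * real (2 * t + 1) * real i / (4 * real m) = real i * theta m t"
  by (simp add: theta_def field_simps)

lemma V_root: assumes "m > 0" shows "poly (V m) (2 * cos (theta m t)) = 0"
proof -
  have "real m * theta m t = of_int (int (2*t+1)) * (pi/2)" using assms by (simp add: theta_def field_simps)
  then have "cos (real m * theta m t) = 0" unfolding cos_zero_iff_int
    by (intro exI[of _ "int (2*t+1)"]) simp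
  then show ?thesis using assms by (simp add: V_cos)
qed

lemma V_sum_eval:
  assumes "m > 0"
  shows "(\<Sum>i<m. f i * poly (V i) (2 * cos (theta m t))) = 2 * DCT m f t"
proof -
  have "(\<Sum>i<m. f i * poly (V i) (2 * cos (theta m t))) = (\<Sum>i\<in>{0..<m}. f i * poly (V i) (2 * cos (theta m t)))"
    by (simp add: lessThan_atLeast0)
  also have "\<dots> = f 0 + (\<Sum>i\<in>{Suc 0..<m}. f i * poly (V i) (2 * cos (theta m t)))"
    using assms by (simp add: sum.atLeast_Suc_lessThan V_cos)
  also have "(\<Sum>i\<in>{Suc 0..<m}. f i * poly (V i) (2 * cos (theta m t))) =
      (\<Sum>i\<in>{1..<m}. 2 * (f i * cos (real i * theta m t)))"
    by (rule sum.cong) (simp_all add: V_cos)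
  finally show ?thesis unfolding DCT_def cos_arg[OF assms] by (simp add: sum_distrib_left mult.left_commute)
qed

lemma V_sum_eval2:
  "(\<Sum>i<m. c i * poly (V i) (2 * cos (theta m t))) =
   (\<Sum>i<m. c i * (if i = 0 then 1 else 2) * cos (real i * theta m t))"
  by (rule sum.cong) (simp_all add: V_cos)

theorem mainTheorem8:
  fixes r n m N :: nat and p q :: "int poly" and a b c :: "nat \<Rightarrow> real"
  assumes "r \<ge> 3" and "n = 2 ^ r" and "m = 2 ^ (r - 2)" and "N = m"
    and "degree p \<le> m - 1" and "degree q \<le> m - 1"
    and "map_poly of_int p = (\<Sum>i<m. smult (a i) (V i))"
    and "map_poly of_int q = (\<Sum>i<m. smult (b i) (V i))"
    and "map_poly of_int (p * q) mod map_poly of_rat (Psi n) = (\<Sum>i<m. smult (c i) (V i))"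
  shows "\<forall>j<N. c j = 4 / real N * IDCT N (\<lambda>i. DCT N a i * DCT N b i) j"
proof -
  define j where "j = r - 3"
  have rj: "r = Suc (Suc (Suc j))" using assms(1) unfolding j_def by arith
  have mj: "m = 2 ^ Suc j" using assms(3) rj by simp
  have m0: "m > 0" using mj by simp
  have nj: "n = 2 ^ Suc (Suc (Suc j))" using assms(2) rj by simp
  have Psi_eq: "map_poly real_of_rat (Psi n) = V m"
    unfolding nj Psi_D of_rat_of_int_poly mj V_D ..
  define Pr where "Pr = map_poly real_of_int (p * q)"
  have val: "(\<Sum>i<m. c i * (if i = 0 then 1 else 2) * cos (real i * theta m t)) = 4 * (DCT m a t * DCT m b t)"
    if "t < m" for t
  proof -
    define x where "x = 2 * cos (theta m t)"
    have Vx: "poly (V m) x = 0" unfolding x_def using m0 by (rule V_root)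
    have "poly Pr x = poly (Pr div V m) x * poly (V m) x + poly (Pr mod V m) x"
      by (metis div_mult_mod_eq poly_add poly_mult)
    then have "poly (Pr mod V m) x = poly Pr x" using Vx by simp
    also have "poly Pr x = poly (map_poly real_of_int p) x * poly (map_poly real_of_int q) x"
      unfolding Pr_def by (simp add: of_int_poly_hom.hom_mult)
    also have "\<dots> = (2 * DCT m a t) * (2 * DCT m b t)"
      unfolding assms(7,8) poly_sum poly_smult x_def using V_sum_eval[OF m0] by simp
    finally have "poly (Pr mod V m) x = 4 * (DCT m a t * DCT m b t)" by simp
    moreover have "poly (Pr mod V m) x = (\<Sum>i<m. c i * poly (V i) x)"
      using assms(9) unfolding Pr_def Psi_eq by (simp add: poly_sum)
    ultimately show ?thesis unfolding x_def V_sum_eval2 by simp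
  qed
  show ?thesis
  proof (intro allI impI)
    fix k assume "k < N"
    then have k: "k < m" using assms(4) by simp
    have "real m * c k = (\<Sum>t<m. (\<Sum>i<m. c i * (if i = 0 then 1 else 2) * cos (real i * theta m t)) * cos (real k * theta m t))"
      using inversion[OF k] by simp
    also have "\<dots> = (\<Sum>t<m. 4 * (DCT m a t * DCT m b t) * cos (real k * theta m t))"
      by (rule sum.cong) (simp_all add: val)
    also have "\<dots> = 4 * IDCT m (\<lambda>i. DCT m a i * DCT m b i) k"
      unfolding IDCT_def cos_arg[OF m0] sum_distrib_left
      by (rule sum.cong) (simp_all add: mult.assoc)
    finally show "c k = 4 / real N * IDCT N (\<lambda>i. DCT N a i * DCT N b i) k"
      using m0 assms(4) by (simp add: field_simps)
  qed
qed


end
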